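(* Let $(K,\tau)\in\mathfrak U$ be a universal regular model. Then for every $\phi\in\mathcal X$, \[ \frac{1}{\sqrt2}\,\sqrt{\|\phi\|_{cb}}\ \le\ \delta^{\tau}_{\mathrm{reg}}(\phi,0)\ \le\ c_+(\tau)\,\sqrt{\|\phi\|_{cb}}, \qquad c_+(\tau):=\frac{\sqrt{1+\|\tau(1)\|^2}}{\sqrt2}. \]
   Context: Let $A$ be a unital $C^*$-algebra and $H$ a Hilbert space. Write $\mathcal X:=\mathrm{CB}(A,B(H))$ for the completely bounded linear maps $A\to B(H)$ with cb-norm $\|\cdot\|_{cb}$, and $\mathrm{CC}(A,B(H))$ for the completely contractive maps. A multiplicative linear map $\tau:A\to B(K)$ ($K$ a Hilbert space) is a regular homomorphism if $\tau(u)^*\tau(u)=\tau(1)^*\tau(1)$ and $\tau(u)\tau(u)^*=\tau(1)\tau(1)^*$ for every unitary $u\in A$. A universal regular model is a pair $(K,\tau)$ with $\tau:A\to B(K)$ a regular homomorphism such that every $\psi\in\mathrm{CC}(A,B(H))$ has the form $\psi(a)=V^*\tau(a)V$ ($a\in A$) for some isometry $V\in B(H,K)$; $\mathfrak U$ denotes the collection of all universal regular models. For $(K,\tau)\in\mathfrak U$ put $T_\tau:=\tau(1)$. For $0\neq\phi\in\mathcal X$ let $\widehat\phi:=\phi/\|\phi\|_{cb}$ and $\mathscr R_\tau(\phi):=\{\|\phi\|_{cb}^{1/2}V:\ V\in B(H,K)\text{ an isometry with }\widehat\phi(a)=V^*\tau(a)V\ \forall a\in A\}$; put $\mathscr R_\tau(0):=\{0\}$.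 Let $\Gamma_\tau:B(H,K)\to B(H,K\oplus K)$, $\Gamma_\tau(W):=\frac1{\sqrt2}\begin{bmatrix}W\\ T_\tau W\end{bmatrix}$, and $\mathscr F_\tau(\phi):=\Gamma_\tau(\mathscr R_\tau(\phi))$ (a nonempty norm-closed bounded subset of $B(H,K\oplus K)$). Let $\delta^\tau_{\mathrm{reg}}(\phi,\psi)$ denote the Hausdorff distance, with respect to the operator norm, between $\mathscr F_\tau(\phi)$ and $\mathscr F_\tau(\psi)$; in particular $\delta^\tau_{\mathrm{reg}}(\phi,0)$ is the Hausdorff distance between $\mathscr F_\tau(\phi)$ and $\{0\}$. *)

theory Defs
  imports "HOL-Analysis.Analysis"
begin

class complex_vector = real_vector +
  fixes scaleC :: "complex \<Rightarrow> 'a \<Rightarrow> 'a"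
  assumes scaleC_add_right: "scaleC c (x + y) = scaleC c x + scaleC c y"
    and scaleC_add_left: "scaleC (c + d) x = scaleC c x + scaleC d x"
    and scaleC_scaleC: "scaleC c (scaleC d x) = scaleC (c * d) x"
    and scaleC_one: "scaleC 1 x = x"
    and scaleR_scaleC: "scaleR r x = scaleC (complex_of_real r) x"

class complex_inner = complex_vector + real_normed_vector +
  fixes cinner :: "'a \<Rightarrow> 'a \<Rightarrow> complex"
  assumes cinner_conj: "cinner x y = cnj (cinner y x)"
    and cinner_add_right: "cinner x (y + z) = cinner x y + cinner x z"
    and cinner_scaleC_right: "cinner x (scaleC c y) = c * cinner x y"
    and cinner_real: "Im (cinner x x) = 0"
    and cinner_nonneg: "0 \<le> Re (cinner x x)"
    and cinner_eq_zero: "cinner x x = 0 \<longleftrightarrow> x = 0"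
    and norm_cinner: "norm x = sqrt (Re (cinner x x))"

class chilbert_space = complex_inner + complete_space

definition clinear :: "('a::complex_vector \<Rightarrow> 'b::complex_vector) \<Rightarrow> bool" where
  "clinear f \<longleftrightarrow> (\<forall>x y. f (x + y) = f x + f y) \<and> (\<forall>c x. f (scaleC c x) = scaleC c (f x))"

definition bounded_clinear :: "('a::complex_inner \<Rightarrow> 'b::complex_inner) \<Rightarrow> bool" where
  "bounded_clinear f \<longleftrightarrow> clinear f \<and> (\<exists>C. \<forall>x. norm (f x) \<le> norm x * C)"

definition adj :: "('a::complex_inner \<Rightarrow> 'b::complex_inner) \<Rightarrow> ('b \<Rightarrow> 'a)" where
  "adj T = (SOME S. \<forall>x y. cinner (T x) y = cinner x (S y))"

definition isometry :: "('a::chilbert_space \<Rightarrow> 'b::chilbert_space) \<Rightarrow> bool" where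
  "isometry V \<longleftrightarrow> bounded_clinear V \<and> adj V \<circ> V = id"

definition unitary_op :: "('a::chilbert_space \<Rightarrow> 'a) \<Rightarrow> bool" where
  "unitary_op u \<longleftrightarrow> bounded_clinear u \<and> adj u \<circ> u = id \<and> u \<circ> adj u = id"

text \<open>A unital C*-algebra, realised (Gelfand--Naimark) as a norm-closed unital
  *-subalgebra of B(L).\<close>
definition unital_cstar_algebra :: "('l::chilbert_space \<Rightarrow> 'l) set \<Rightarrow> bool" where
  "unital_cstar_algebra A \<longleftrightarrow>
     (\<forall>a\<in>A. bounded_clinear a) \<and> id \<in> A \<and>
     (\<forall>a\<in>A. \<forall>b\<in>A. (\<lambda>x. a x + b x) \<in> A) \<and>
     (\<forall>a\<in>A. \<forall>c. (\<lambda>x. scaleC c (a x)) \<in> A) \<and>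
     (\<forall>a\<in>A. \<forall>b\<in>A. a \<circ> b \<in> A) \<and>
     (\<forall>a\<in>A. adj a \<in> A) \<and>
     (\<forall>T. bounded_clinear T \<and> (\<forall>e>0. \<exists>a\<in>A. onorm (\<lambda>x. T x - a x) < e) \<longrightarrow> T \<in> A)"

definition matnorm :: "nat \<Rightarrow> (nat \<Rightarrow> nat \<Rightarrow> ('a::complex_inner \<Rightarrow> 'b::complex_inner)) \<Rightarrow> real" where
  "matnorm n M = (SUP x \<in> {x::nat \<Rightarrow> 'a. (\<Sum>j<n. (norm (x j))\<^sup>2) \<le> 1}.
                    sqrt (\<Sum>i<n. (norm (\<Sum>j<n. M i j (x j)))\<^sup>2))"

definition linear_on :: "('l::chilbert_space \<Rightarrow> 'l) set \<Rightarrow> (('l \<Rightarrow> 'l) \<Rightarrow> ('h::chilbert_space \<Rightarrow> 'h)) \<Rightarrow> bool" where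
  "linear_on A \<phi> \<longleftrightarrow> (\<forall>a\<in>A. bounded_clinear (\<phi> a)) \<and>
     (\<forall>a\<in>A. \<forall>b\<in>A. \<phi> (\<lambda>x. a x + b x) = (\<lambda>y. \<phi> a y + \<phi> b y)) \<and>
     (\<forall>a\<in>A. \<forall>c. \<phi> (\<lambda>x. scaleC c (a x)) = (\<lambda>y. scaleC c (\<phi> a y)))"

definition cb_values :: "('l::chilbert_space \<Rightarrow> 'l) set \<Rightarrow> (('l \<Rightarrow> 'l) \<Rightarrow> ('h::chilbert_space \<Rightarrow> 'h)) \<Rightarrow> real set" where
  "cb_values A \<phi> = {matnorm n (\<lambda>i j. \<phi> (M i j)) | n M.
       (\<forall>i<n. \<forall>j<n. M i j \<in> A) \<and> matnorm n M \<le> 1}"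

definition cbnorm :: "('l::chilbert_space \<Rightarrow> 'l) set \<Rightarrow> (('l \<Rightarrow> 'l) \<Rightarrow> ('h::chilbert_space \<Rightarrow> 'h)) \<Rightarrow> real" where
  "cbnorm A \<phi> = Sup (cb_values A \<phi>)"

definition CB :: "('l::chilbert_space \<Rightarrow> 'l) set \<Rightarrow> (('l \<Rightarrow> 'l) \<Rightarrow> ('h::chilbert_space \<Rightarrow> 'h)) \<Rightarrow> bool" where
  "CB A \<phi> \<longleftrightarrow> linear_on A \<phi> \<and> bdd_above (cb_values A \<phi>)"

definition CC :: "('l::chilbert_space \<Rightarrow> 'l) set \<Rightarrow> (('l \<Rightarrow> 'l) \<Rightarrow> ('h::chilbert_space \<Rightarrow> 'h)) \<Rightarrow> bool" where
  "CC A \<phi> \<longleftrightarrow> CB A \<phi> \<and> cbnorm A \<phi> \<le> 1"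

definition regular_hom :: "('l::chilbert_space \<Rightarrow> 'l) set \<Rightarrow> (('l \<Rightarrow> 'l) \<Rightarrow> ('k::chilbert_space \<Rightarrow> 'k)) \<Rightarrow> bool" where
  "regular_hom A \<tau> \<longleftrightarrow> linear_on A \<tau> \<and>
     (\<forall>a\<in>A. \<forall>b\<in>A. \<tau> (a \<circ> b) = \<tau> a \<circ> \<tau> b) \<and>
     (\<forall>u\<in>A. unitary_op u \<longrightarrow>
        adj (\<tau> u) \<circ> \<tau> u = adj (\<tau> id) \<circ> \<tau> id \<and>
        \<tau> u \<circ> adj (\<tau> u) = \<tau> id \<circ> adj (\<tau> id))"

text \<open>\<open>(K,\<tau>) \<in> \<UU>\<close> relative to the fixed Hilbert space H (given by its type 'h).\<close>
definition universal_regular_model ::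
  "('l::chilbert_space \<Rightarrow> 'l) set \<Rightarrow> 'h::chilbert_space itself \<Rightarrow> (('l \<Rightarrow> 'l) \<Rightarrow> ('k::chilbert_space \<Rightarrow> 'k)) \<Rightarrow> bool" where
  "universal_regular_model A H \<tau> \<longleftrightarrow> regular_hom A \<tau> \<and>
     (\<forall>\<psi> :: ('l \<Rightarrow> 'l) \<Rightarrow> ('h \<Rightarrow> 'h). CC A \<psi> \<longrightarrow>
        (\<exists>V :: 'h \<Rightarrow> 'k. isometry V \<and> (\<forall>a\<in>A. \<psi> a = adj V \<circ> \<tau> a \<circ> V)))"

definition zero_map :: "('l::chilbert_space \<Rightarrow> 'l) set \<Rightarrow> (('l \<Rightarrow> 'l) \<Rightarrow> ('h::chilbert_space \<Rightarrow> 'h)) \<Rightarrow> bool" where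
  "zero_map A \<phi> \<longleftrightarrow> (\<forall>a\<in>A. \<phi> a = (\<lambda>x. 0))"

definition Rset :: "('l::chilbert_space \<Rightarrow> 'l) set \<Rightarrow> (('l \<Rightarrow> 'l) \<Rightarrow> ('k::chilbert_space \<Rightarrow> 'k))
      \<Rightarrow> (('l \<Rightarrow> 'l) \<Rightarrow> ('h::chilbert_space \<Rightarrow> 'h)) \<Rightarrow> ('h \<Rightarrow> 'k) set" where
  "Rset A \<tau> \<phi> = (if zero_map A \<phi> then {\<lambda>x. 0}
     else {(\<lambda>x. sqrt (cbnorm A \<phi>) *\<^sub>R V x) | V. isometry V \<and>
             (\<forall>a\<in>A. (\<lambda>y. (1 / cbnorm A \<phi>) *\<^sub>R \<phi> a y) = adj V \<circ> \<tau> a \<circ> V)})"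

definition Gamma :: "('l::chilbert_space \<Rightarrow> 'l) set \<Rightarrow> (('l \<Rightarrow> 'l) \<Rightarrow> ('k::chilbert_space \<Rightarrow> 'k))
      \<Rightarrow> ('h::chilbert_space \<Rightarrow> 'k) \<Rightarrow> ('h \<Rightarrow> 'k \<times> 'k)" where
  "Gamma A \<tau> W = (\<lambda>x. ((1 / sqrt 2) *\<^sub>R W x, (1 / sqrt 2) *\<^sub>R \<tau> id (W x)))"

definition Fset :: "('l::chilbert_space \<Rightarrow> 'l) set \<Rightarrow> (('l \<Rightarrow> 'l) \<Rightarrow> ('k::chilbert_space \<Rightarrow> 'k))
      \<Rightarrow> (('l \<Rightarrow> 'l) \<Rightarrow> ('h::chilbert_space \<Rightarrow> 'h)) \<Rightarrow> ('h \<Rightarrow> 'k \<times> 'k) set" where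
  "Fset A \<tau> \<phi> = Gamma A \<tau> ` Rset A \<tau> \<phi>"

definition op_hausdist :: "('a::real_normed_vector \<Rightarrow> 'b::real_normed_vector) set \<Rightarrow> ('a \<Rightarrow> 'b) set \<Rightarrow> real" where
  "op_hausdist S T = max (SUP s\<in>S. INF t\<in>T. onorm (\<lambda>x. s x - t x))
                         (SUP t\<in>T. INF s\<in>S. onorm (\<lambda>x. s x - t x))"

definition delta_reg :: "('l::chilbert_space \<Rightarrow> 'l) set \<Rightarrow> (('l \<Rightarrow> 'l) \<Rightarrow> ('k::chilbert_space \<Rightarrow> 'k))
      \<Rightarrow> (('l \<Rightarrow> 'l) \<Rightarrow> ('h::chilbert_space \<Rightarrow> 'h)) \<Rightarrow> (('l \<Rightarrow> 'l) \<Rightarrow> ('h \<Rightarrow> 'h)) \<Rightarrow> real" where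
  "delta_reg A \<tau> \<phi> \<psi> = op_hausdist (Fset A \<tau> \<phi>) (Fset A \<tau> \<psi>)"

end

theory Submission
  imports Defs
begin


lemma cinner_add_left: "cinner (x + y) z = cinner x z + cinner (y::'a::complex_inner) z"
  by (metis cinner_conj cinner_add_right complex_cnj_add)

lemma cinner_scaleC_left: "cinner (scaleC c x) y = cnj c * cinner (x::'a::complex_inner) y"
  by (metis cinner_conj cinner_scaleC_right complex_cnj_mult complex_cnj_cnj)

lemma cinner_scaleR_right: "cinner x (r *\<^sub>R y) = complex_of_real r * cinner (x::'a::complex_inner) y"
  by (simp add: scaleR_scaleC cinner_scaleC_right)

lemma cinner_scaleR_left: "cinner (r *\<^sub>R x) y = complex_of_real r * cinner (x::'a::complex_inner) y"
  by (simp add: scaleR_scaleC cinner_scaleC_left)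

lemma cinner_zero_right [simp]: "cinner x (0::'a::complex_inner) = 0"
  using cinner_add_right[of x 0 0] by simp

lemma cinner_zero_left [simp]: "cinner (0::'a::complex_inner) x = 0"
  using cinner_add_left[of 0 0 x] by simp

lemma cinner_minus_right: "cinner x (- y) = - cinner x (y::'a::complex_inner)"
proof -
  have "cinner x y + cinner x (- y) = 0" using cinner_add_right[of x y "-y"] by simp
  then show ?thesis by (simp add: add_eq_0_iff2)
qed

lemma cinner_minus_left: "cinner (- x) y = - cinner x (y::'a::complex_inner)"
proof -
  have "cinner x y + cinner (- x) y = 0" using cinner_add_left[of x "-x" y] by simp
  then show ?thesis by (simp add: add_eq_0_iff2)
qed

lemma cinner_diff_right: "cinner x (y - z) = cinner x y - cinner x (z::'a::complex_inner)"
  unfolding diff_conv_add_uminus cinner_add_right cinner_minus_right ..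

lemma cinner_diff_left: "cinner (x - y) z = cinner x z - cinner (y::'a::complex_inner) z"
  unfolding diff_conv_add_uminus cinner_add_left cinner_minus_left ..

lemma norm_sq_cinner: "(norm x)\<^sup>2 = Re (cinner x (x::'a::complex_inner))"
  by (simp add: norm_cinner cinner_nonneg)

lemma Re_cinner_sym: "Re (cinner y x) = Re (cinner x (y::'a::complex_inner))"
  by (subst cinner_conj) simp

lemma norm_add_sq: "(norm (a + b))\<^sup>2 = (norm a)\<^sup>2 + 2 * Re (cinner a b) + (norm (b::'a::complex_inner))\<^sup>2"
  unfolding norm_sq_cinner by (simp add: cinner_add_left cinner_add_right Re_cinner_sym[of b a])

lemma norm_diff_sq: "(norm (a - b))\<^sup>2 = (norm a)\<^sup>2 - 2 * Re (cinner a b) + (norm (b::'a::complex_inner))\<^sup>2"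
  unfolding norm_sq_cinner by (simp add: cinner_diff_left cinner_diff_right Re_cinner_sym[of b a])

lemma Re_cinner_scaleR_right: "Re (cinner x (r *\<^sub>R y)) = r * Re (cinner x (y::'a::complex_inner))"
  by (simp add: cinner_scaleR_right)

lemma Re_cinner_scaleR_left: "Re (cinner (r *\<^sub>R x) y) = r * Re (cinner x (y::'a::complex_inner))"
  by (simp add: cinner_scaleR_left)

lemma Re_cinner_le: "Re (cinner a b) \<le> norm a * norm (b::'a::complex_inner)"
proof (cases "norm a * norm b = 0")
  case True
  then have "a = 0 \<or> b = 0" by simp
  then show ?thesis using True by auto
next
  case False
  then have pos: "norm a * norm b > 0" by (simp add: order_less_le)
  have "0 \<le> (norm (norm b *\<^sub>R a - norm a *\<^sub>R b))\<^sup>2" by simp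
  also have "\<dots> = 2 * (norm a * norm b) * (norm a * norm b) - 2 * (norm a * norm b) * Re (cinner a b)"
    unfolding norm_diff_sq Re_cinner_scaleR_right Re_cinner_scaleR_left
    by (simp add: power2_eq_square algebra_simps)
  finally have "2 * (norm a * norm b) * Re (cinner a b) \<le> 2 * (norm a * norm b) * (norm a * norm b)" by simp
  then show ?thesis using pos by (simp add: mult_le_cancel_left_pos)
qed

lemma abs_Re_cinner_le: "\<bar>Re (cinner a b)\<bar> \<le> norm a * norm (b::'a::complex_inner)"
  using Re_cinner_le[of a b] Re_cinner_le[of a "-b"] by (simp add: cinner_minus_right)


lemma riesz_re:
  fixes h :: "'a::chilbert_space \<Rightarrow> real"
  assumes add: "\<And>x y. h (x + y) = h x + h y"
    and scl: "\<And>r x. h (r *\<^sub>R x) = r * h x"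
    and bnd: "\<And>x. \<bar>h x\<bar> \<le> K * norm x"
  shows "\<exists>u. \<forall>x. h x = Re (cinner u x)"
proof (cases "\<forall>x. h x = 0")
  case True
  then show ?thesis by (intro exI[of _ 0]) simp
next
  case False
  then obtain x0 where x0: "h x0 \<noteq> 0" by blast
  have bl: "bounded_linear h"
    by (rule bounded_linear_intro[of h K]) (use add scl bnd in \<open>auto simp: mult.commute\<close>)
  have h0: "h 0 = 0" using scl[of 0 0] by simp
  have hneg: "h (- x) = - h x" for x using scl[of "-1" x] by simp
  define S where "S = h ` {x. norm x \<le> 1}"
  define L where "L = Sup S"
  have Sne: "S \<noteq> {}" unfolding S_def by (auto intro: exI[of _ 0])
  have Sbdd: "bdd_above S"
  proof -
    have "h x \<le> \<bar>K\<bar>" if "norm x \<le> 1" for x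
    proof -
      have "h x \<le> K * norm x" using bnd[of x] by linarith
      also have "\<dots> \<le> \<bar>K\<bar> * norm x" by (simp add: mult_right_mono)
      also have "\<dots> \<le> \<bar>K\<bar>" using that by (simp add: mult_left_le)
      finally show ?thesis .
    qed
    then show ?thesis unfolding S_def bdd_above_def by blast
  qed
  have up: "h x \<le> L" if "norm x \<le> 1" for x
    unfolding L_def by (rule cSup_upper[OF _ Sbdd]) (use that S_def in auto)
  have P1: "h x \<le> L * norm x" for x
  proof (cases "x = 0")
    case True then show ?thesis by (simp add: h0)
  next
    case False
    then have nx: "norm x > 0" by simp
    have "h ((1 / norm x) *\<^sub>R x) \<le> L" by (rule up) (use nx in simp)
    then have "h x / norm x \<le> L" by (simp add: scl)
    then show ?thesis using nx by (simp add: pos_divide_le_eq mult.commute)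
  qed
  have Lpos: "L > 0"
  proof -
    define z where "z = (if h x0 > 0 then x0 else - x0)"
    have hz: "h z > 0" using x0 unfolding z_def by (auto simp: hneg)
    then have "z \<noteq> 0" using h0 by auto
    then have "norm z > 0" by simp
    moreover have "0 < L * norm z" using hz P1[of z] by linarith
    ultimately show ?thesis by (simp add: zero_less_mult_iff)
  qed
  define e where "e n = inverse (real (Suc n))" for n
  have epos: "e n > 0" for n unfolding e_def by simp
  have "\<forall>n. \<exists>x. norm x \<le> 1 \<and> L - e n < h x"
  proof
    fix n
    have "L - e n < Sup S" using epos[of n] unfolding L_def by simp
    then obtain s where "s \<in> S" "L - e n < s" using less_cSup_iff[OF Sne Sbdd] by blast
    then show "\<exists>x. norm x \<le> 1 \<and> L - e n < h x" unfolding S_def by auto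
  qed
  then obtain X where X1: "\<And>n. norm (X n) \<le> 1" and X2: "\<And>n. L - e n < h (X n)"
    by metis
  have key: "(norm (X m - X n))\<^sup>2 \<le> 4 * ((e m + e n) / L)" for m n
  proof -
    define \<delta> where "\<delta> = (e m + e n) / L"
    define s where "s = norm (X m + X n)"
    have "h (X m + X n) > 2 * L - (e m + e n)" using X2[of m] X2[of n] add by simp
    moreover have "h (X m + X n) \<le> L * s" using P1 s_def by simp
    moreover have "L * (2 - \<delta>) = 2 * L - (e m + e n)" using Lpos unfolding \<delta>_def by (simp add: field_simps)
    ultimately have "L * (2 - \<delta>) < L * s" by linarith
    then have sgt: "2 - \<delta> < s" using Lpos by simp
    have par: "(norm (X m - X n))\<^sup>2 = 2 * (norm (X m))\<^sup>2 + 2 * (norm (X n))\<^sup>2 - s\<^sup>2"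
      unfolding s_def norm_add_sq norm_diff_sq by simp
    have "(norm (X m))\<^sup>2 \<le> 1" "(norm (X n))\<^sup>2 \<le> 1" using X1 by (simp_all add: power_le_one)
    then have le4: "(norm (X m - X n))\<^sup>2 \<le> 4 - s\<^sup>2" using par by simp
    have "4 - s\<^sup>2 \<le> 4 * \<delta>"
    proof (cases "\<delta> \<ge> 1")
      case True then show ?thesis by (smt (verit) zero_le_power2)
    next
      case False
      then have "0 \<le> 2 - \<delta>" by simp
      then have "(2 - \<delta>)\<^sup>2 \<le> s\<^sup>2" using sgt by (simp add: power_mono)
      moreover have "4 - 4 * \<delta> \<le> (2 - \<delta>)\<^sup>2" by (simp add: power2_eq_square algebra_simps)
      ultimately show ?thesis by simp
    qed
    then show ?thesis using le4 unfolding \<delta>_def by simp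
  qed
  have cauchy: "Cauchy X"
    unfolding Cauchy_def
  proof (intro allI impI)
    fix \<epsilon> :: real assume "\<epsilon> > 0"
    obtain N where N: "8 / (L * \<epsilon>\<^sup>2) < real N" using reals_Archimedean2 by blast
    have LN: "8 / (L * real (Suc N)) < \<epsilon>\<^sup>2"
    proof -
      have pos: "L * \<epsilon>\<^sup>2 > 0" using Lpos \<open>\<epsilon> > 0\<close> by simp
      have "8 < real (Suc N) * (L * \<epsilon>\<^sup>2)" using N pos by (simp add: divide_less_eq distrib_right)
      then have "8 < \<epsilon>\<^sup>2 * (L * real (Suc N))" by (simp add: mult_ac)
      moreover have "L * real (Suc N) > 0" using Lpos by simp
      ultimately show ?thesis by (simp add: pos_divide_less_eq)
    qed
    show "\<exists>M. \<forall>m\<ge>M. \<forall>n\<ge>M. dist (X m) (X n) < \<epsilon>"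
    proof (intro exI allI impI)
      fix m n assume mn: "N \<le> m" "N \<le> n"
      have em: "e m \<le> inverse (real (Suc N))" "e n \<le> inverse (real (Suc N))"
        using mn unfolding e_def by (simp_all add: le_imp_inverse_le)
      have "(dist (X m) (X n))\<^sup>2 \<le> 4 * ((e m + e n) / L)" using key by (simp add: dist_norm)
      also have "\<dots> \<le> 4 * ((2 * inverse (real (Suc N))) / L)"
        using em Lpos by (simp add: divide_right_mono)
      also have "\<dots> = 8 / (L * real (Suc N))" by (simp add: field_simps)
      also have "\<dots> < \<epsilon>\<^sup>2" by (rule LN)
      finally have "(dist (X m) (X n))\<^sup>2 < \<epsilon>\<^sup>2" .
      then show "dist (X m) (X n) < \<epsilon>" using \<open>\<epsilon> > 0\<close> by (simp add: power_less_imp_less_base)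
    qed
  qed
  then obtain u where lim: "X \<longlonglongrightarrow> u" using Cauchy_convergent_iff convergent_def by blast
  have nu: "norm u \<le> 1"
    by (rule LIMSEQ_le_const2[OF tendsto_norm[OF lim]]) (use X1 in auto)
  have hlim: "(\<lambda>n. h (X n)) \<longlonglongrightarrow> h u" by (rule bounded_linear.tendsto[OF bl lim])
  have elim: "(\<lambda>n. L - e n) \<longlonglongrightarrow> L"
    using tendsto_diff[OF tendsto_const LIMSEQ_inverse_real_of_nat, of L] unfolding e_def by simp
  have "L \<le> h u"
    by (rule tendsto_le[OF _ hlim elim]) (use X2 in \<open>auto intro!: always_eventually less_imp_le\<close>)
  moreover have "h u \<le> L" using up nu by simp
  ultimately have hu: "h u = L" by simp
  have "L \<le> L * norm u" using P1[of u] hu by simp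
  then have "1 \<le> norm u" using Lpos by simp
  then have nu1: "norm u = 1" using nu by simp
  have main: "h x = L * Re (cinner u x)" for x
  proof (rule ccontr)
    assume neq: "h x \<noteq> L * Re (cinner u x)"
    define a where "a = Re (cinner u x)"
    define b where "b = (norm x)\<^sup>2"
    define d where "d = h x - L * a"
    have b0: "b \<ge> 0" unfolding b_def by simp
    have ineq: "t * d \<le> (L * b / 2) * t\<^sup>2" for t
    proof -
      define N where "N = norm (u + t *\<^sub>R x)"
      have N2: "N\<^sup>2 = 1 + 2 * t * a + t\<^sup>2 * b"
        unfolding N_def norm_add_sq nu1 Re_cinner_scaleR_right a_def b_def
        by (simp add: power_mult_distrib)
      have "L + t * h x = h (u + t *\<^sub>R x)" using add scl hu by simp
      also have "\<dots> \<le> L * N" unfolding N_def by (rule P1)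
      also have "\<dots> \<le> L * ((1 + N\<^sup>2) / 2)"
      proof -
        have "0 \<le> (N - 1)\<^sup>2" by simp
        then have "N \<le> (1 + N\<^sup>2) / 2" by (simp add: power2_eq_square algebra_simps)
        then show ?thesis using Lpos by simp
      qed
      finally have "L + t * h x \<le> L * ((1 + (1 + 2 * t * a + t\<^sup>2 * b)) / 2)" unfolding N2 .
      then show ?thesis unfolding d_def by (simp add: algebra_simps)
    qed
    define s where "s = 1 / (L * b + 1)"
    have Lb: "L * b \<ge> 0" using Lpos b0 by simp
    have spos: "s > 0" unfolding s_def using Lb by simp
    have dne: "d \<noteq> 0" using neq unfolding d_def a_def by simp
    have "(d * s) * d \<le> (L * b / 2) * (d * s)\<^sup>2" using ineq[of "d * s"] by simp
    then have "(d * d * s) * 1 \<le> (d * d * s) * ((L * b / 2) * s)"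
      by (simp add: power2_eq_square algebra_simps)
    moreover have "d * d * s > 0" using dne spos by (metis mult_pos_pos not_real_square_gt_zero)
    ultimately have "1 \<le> (L * b / 2) * s" by (simp add: mult_le_cancel_left_pos)
    moreover have "(L * b / 2) * s < 1" unfolding s_def using Lb by (simp add: field_simps)
    ultimately show False by simp
  qed
  show ?thesis
    by (intro exI[of _ "L *\<^sub>R u"] allI) (simp add: main Re_cinner_scaleR_left)
qed


lemma clinear_scaleR:
  assumes "bounded_clinear f" shows "f (r *\<^sub>R x) = r *\<^sub>R f x"
  using assms unfolding bounded_clinear_def clinear_def by (simp add: scaleR_scaleC)

lemma clinear_add:
  assumes "bounded_clinear f" shows "f (x + y) = f x + f y"
  using assms unfolding bounded_clinear_def clinear_def by simp

lemma clinear_scaleC: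
  assumes "bounded_clinear f" shows "f (scaleC c x) = scaleC c (f x)"
  using assms unfolding bounded_clinear_def clinear_def by simp

lemma bounded_clinear_bounded_linear:
  assumes "bounded_clinear f" shows "bounded_linear f"
proof -
  obtain C where C: "\<And>x. norm (f x) \<le> norm x * C" using assms unfolding bounded_clinear_def by blast
  show ?thesis
    by (rule bounded_linear_intro[of f C]) (use assms C clinear_add clinear_scaleR in auto)
qed

lemma adj_exists_pt:
  fixes V :: "'a::chilbert_space \<Rightarrow> 'b::complex_inner"
  assumes bc: "bounded_clinear V"
  shows "\<exists>u. \<forall>x. cinner (V x) y = cinner x u"
proof -
  obtain C where C: "\<And>x. norm (V x) \<le> norm x * C" using bc unfolding bounded_clinear_def by blast
  define h where "h x = Re (cinner y (V x))" for x
  have "\<exists>u. \<forall>x. h x = Re (cinner u x)"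
  proof (rule riesz_re[where K = "norm y * C"])
    show "h (x + z) = h x + h z" for x z unfolding h_def by (simp add: clinear_add[OF bc] cinner_add_right)
    show "h (r *\<^sub>R x) = r * h x" for r x unfolding h_def by (simp add: clinear_scaleR[OF bc] Re_cinner_scaleR_right)
    show "\<bar>h x\<bar> \<le> norm y * C * norm x" for x
    proof -
      have "\<bar>h x\<bar> \<le> norm y * norm (V x)" unfolding h_def by (rule abs_Re_cinner_le)
      also have "\<dots> \<le> norm y * (norm x * C)" by (rule mult_left_mono[OF C]) simp
      finally show ?thesis by (simp add: mult_ac)
    qed
  qed
  then obtain u where u: "\<And>x. h x = Re (cinner u x)" by blast
  have eq: "cinner y (V x) = cinner u x" for x
  proof (rule complex_eqI)
    show "Re (cinner y (V x)) = Re (cinner u x)" using u[of x] unfolding h_def .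
    have "Re (cinner y (V (scaleC \<i> x))) = Re (cinner u (scaleC \<i> x))" using u[of "scaleC \<i> x"] unfolding h_def .
    then show "Im (cinner y (V x)) = Im (cinner u x)"
      by (simp add: clinear_scaleC[OF bc] cinner_scaleC_right)
  qed
  show ?thesis
  proof (intro exI allI)
    fix x
    have "cinner (V x) y = cnj (cinner y (V x))" by (rule cinner_conj)
    also have "\<dots> = cnj (cinner u x)" by (simp add: eq)
    also have "\<dots> = cinner x u" by (subst cinner_conj[of x u]) simp
    finally show "cinner (V x) y = cinner x u" .
  qed
qed

lemma adj_prop:
  fixes V :: "'a::chilbert_space \<Rightarrow> 'b::complex_inner"
  assumes bc: "bounded_clinear V"
  shows "cinner (V x) y = cinner x (adj V y)"
proof -
  have "\<forall>y. \<exists>u. \<forall>x. cinner (V x) y = cinner x u" using adj_exists_pt[OF bc] by blast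
  then have "\<exists>S. \<forall>x y. cinner (V x) y = cinner x (S y)" by metis
  then have "\<forall>x y. cinner (V x) y = cinner x (adj V y)"
    unfolding adj_def by (rule someI_ex)
  then show ?thesis by blast
qed

lemma isometry_norm:
  fixes V :: "'a::chilbert_space \<Rightarrow> 'b::chilbert_space"
  assumes "isometry V"
  shows "norm (V x) = norm x"
proof -
  have bc: "bounded_clinear V" and aV: "adj V \<circ> V = id" using assms unfolding isometry_def by auto
  have "(norm (V x))\<^sup>2 = Re (cinner (V x) (V x))" by (rule norm_sq_cinner)
  also have "\<dots> = Re (cinner x (adj V (V x)))" by (simp add: adj_prop[OF bc])
  also have "adj V (V x) = x" using aV by (metis comp_apply id_apply)
  finally have "(norm (V x))\<^sup>2 = (norm x)\<^sup>2" by (simp add: norm_sq_cinner)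
  then show ?thesis by simp
qed


lemma matnorm_bdd:
  fixes B :: "nat \<Rightarrow> nat \<Rightarrow> 'a::complex_inner \<Rightarrow> 'b::complex_inner"
  assumes "\<forall>i<n. \<forall>j<n. bounded_clinear (B i j)"
  shows "bdd_above ((\<lambda>x. sqrt (\<Sum>i<n. (norm (\<Sum>j<n. B i j (x j)))\<^sup>2)) ` {x. (\<Sum>j<n. (norm (x j))\<^sup>2) \<le> 1})"
proof -
  have "\<forall>i j. \<exists>C. i < n \<longrightarrow> j < n \<longrightarrow> (\<forall>y. norm (B i j y) \<le> norm y * C)"
    using assms unfolding bounded_clinear_def by blast
  then obtain C where C: "\<And>i j y. i < n \<Longrightarrow> j < n \<Longrightarrow> norm (B i j y) \<le> norm y * C i j" by metis
  define D where "D = (\<Sum>i<n. \<Sum>j<n. \<bar>C i j\<bar>)"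
  have D0: "D \<ge> 0" unfolding D_def by (simp add: sum_nonneg)
  have CD: "C i j \<le> D" if "i < n" "j < n" for i j
  proof -
    have "C i j \<le> \<bar>C i j\<bar>" by simp
    also have "\<dots> \<le> (\<Sum>j<n. \<bar>C i j\<bar>)" by (rule member_le_sum) (use that in auto)
    also have "\<dots> \<le> D" unfolding D_def
      by (rule member_le_sum[where f = "\<lambda>i. \<Sum>j<n. \<bar>C i j\<bar>"]) (use that in \<open>auto intro: sum_nonneg\<close>)
    finally show ?thesis .
  qed
  have "sqrt (\<Sum>i<n. (norm (\<Sum>j<n. B i j (x j)))\<^sup>2) \<le> sqrt (real n * (real n * D)\<^sup>2)"
    if x: "(\<Sum>j<n. (norm (x j))\<^sup>2) \<le> 1" for x
  proof -
    have xj: "norm (x j) \<le> 1" if "j < n" for j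
    proof -
      have "(norm (x j))\<^sup>2 \<le> (\<Sum>j<n. (norm (x j))\<^sup>2)" by (rule member_le_sum) (use that in auto)
      then have "(norm (x j))\<^sup>2 \<le> 1\<^sup>2" using x by simp
      then show ?thesis by (rule power2_le_imp_le) simp
    qed
    have bij: "norm (B i j (x j)) \<le> D" if "i < n" "j < n" for i j
    proof -
      have "norm (B i j (x j)) \<le> norm (x j) * C i j" using C that by blast
      also have "\<dots> \<le> norm (x j) * D" using CD[OF that] by (simp add: mult_left_mono)
      also have "\<dots> \<le> 1 * D" using xj[OF that(2)] D0 by (rule mult_right_mono)
      finally show ?thesis by simp
    qed
    have rowb: "(norm (\<Sum>j<n. B i j (x j)))\<^sup>2 \<le> (real n * D)\<^sup>2" if "i < n" for i
    proof -
      have "norm (\<Sum>j<n. B i j (x j)) \<le> (\<Sum>j<n. norm (B i j (x j)))" by (rule norm_sum)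
      also have "\<dots> \<le> (\<Sum>j<n. D)" by (rule sum_mono) (use bij that in auto)
      finally have "norm (\<Sum>j<n. B i j (x j)) \<le> real n * D" by simp
      then show ?thesis by (rule power_mono) simp
    qed
    have "(\<Sum>i<n. (norm (\<Sum>j<n. B i j (x j)))\<^sup>2) \<le> (\<Sum>i<n. (real n * D)\<^sup>2)"
      by (rule sum_mono) (use rowb in auto)
    then show ?thesis by simp
  qed
  then show ?thesis unfolding bdd_above_def by blast
qed

lemma matnorm_upper:
  fixes B :: "nat \<Rightarrow> nat \<Rightarrow> 'a::complex_inner \<Rightarrow> 'b::complex_inner"
  assumes "\<forall>i<n. \<forall>j<n. bounded_clinear (B i j)" and "(\<Sum>j<n. (norm (x j))\<^sup>2) \<le> 1"
  shows "sqrt (\<Sum>i<n. (norm (\<Sum>j<n. B i j (x j)))\<^sup>2) \<le> matnorm n B"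
  unfolding matnorm_def by (rule cSUP_upper[OF _ matnorm_bdd[OF assms(1)]]) (use assms(2) in simp)

lemma matnorm_least:
  fixes B :: "nat \<Rightarrow> nat \<Rightarrow> 'a::complex_inner \<Rightarrow> 'b::complex_inner"
  assumes "\<And>x. (\<Sum>j<n. (norm (x j))\<^sup>2) \<le> 1 \<Longrightarrow> sqrt (\<Sum>i<n. (norm (\<Sum>j<n. B i j (x j)))\<^sup>2) \<le> b"
  shows "matnorm n B \<le> b"
  unfolding matnorm_def
proof (rule cSUP_least)
  show "{x. (\<Sum>j<n. (norm (x j))\<^sup>2) \<le> 1} \<noteq> {}" by (auto intro!: exI[of _ "\<lambda>_. 0"])
qed (use assms in auto)

lemma zero_in_cb_values: "0 \<in> cb_values A \<phi>"
  unfolding cb_values_def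
  by (rule CollectI, rule exI[of _ 0], rule exI[of _ "\<lambda>i j. id"]) (simp add: matnorm_def)


lemma gamma_bounds:
  fixes V :: "'h::chilbert_space \<Rightarrow> 'k::chilbert_space" and T :: "'k \<Rightarrow> 'k" and x1 :: 'h
  assumes iso: "isometry V" and bcT: "bounded_clinear T" and c0: "c \<ge> 0" and x1: "norm x1 = 1"
  shows "1 / sqrt 2 * sqrt c \<le> onorm (\<lambda>x. ((1 / sqrt 2) *\<^sub>R (sqrt c *\<^sub>R V x), (1 / sqrt 2) *\<^sub>R T (sqrt c *\<^sub>R V x)))
       \<and> onorm (\<lambda>x. ((1 / sqrt 2) *\<^sub>R (sqrt c *\<^sub>R V x), (1 / sqrt 2) *\<^sub>R T (sqrt c *\<^sub>R V x)))
           \<le> sqrt (1 + (onorm T)\<^sup>2) / sqrt 2 * sqrt c"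
proof -
  define F where "F = (\<lambda>x. ((1 / sqrt 2) *\<^sub>R (sqrt c *\<^sub>R V x), (1 / sqrt 2) *\<^sub>R T (sqrt c *\<^sub>R V x)))"
  have bcV: "bounded_clinear V" using iso unfolding isometry_def by simp
  have blV: "bounded_linear V" by (rule bounded_clinear_bounded_linear[OF bcV])
  have blT: "bounded_linear T" by (rule bounded_clinear_bounded_linear[OF bcT])
  have blW: "bounded_linear (\<lambda>x. sqrt c *\<^sub>R V x)"
    by (rule bounded_linear_compose[OF bounded_linear_scaleR_right blV])
  have blF: "bounded_linear F" unfolding F_def
    by (intro bounded_linear_Pair bounded_linear_compose[OF bounded_linear_scaleR_right]
        bounded_linear_compose[OF blT] blW)
  have nW: "norm (sqrt c *\<^sub>R V x) = sqrt c * norm x" for x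
    using c0 by (simp add: isometry_norm[OF iso])
  have s2: "(1 / sqrt 2)\<^sup>2 = (1/2::real)" by (simp add: power_divide)
  have nF: "(norm (F x))\<^sup>2 = (1/2) * ((sqrt c * norm x)\<^sup>2 + (norm (T (sqrt c *\<^sub>R V x)))\<^sup>2)" for x
    unfolding F_def norm_Pair using c0 by (simp add: isometry_norm[OF iso] power_mult_distrib power_divide algebra_simps)
  define U where "U = sqrt (1 + (onorm T)\<^sup>2) / sqrt 2 * sqrt c"
  have U0: "U \<ge> 0" unfolding U_def using c0 by simp
  have U2: "U\<^sup>2 = (1 + (onorm T)\<^sup>2) / 2 * c"
    unfolding U_def using c0 by (simp add: power_mult_distrib power_divide add_nonneg_nonneg)
  have upper: "norm (F x) \<le> U * norm x" for x
  proof (rule power2_le_imp_le)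
    have "norm (T (sqrt c *\<^sub>R V x)) \<le> onorm T * (sqrt c * norm x)"
      using onorm[OF blT, of "sqrt c *\<^sub>R V x"] unfolding nW .
    then have "(norm (T (sqrt c *\<^sub>R V x)))\<^sup>2 \<le> (onorm T * (sqrt c * norm x))\<^sup>2"
      by (rule power_mono) simp
    then have "(norm (F x))\<^sup>2 \<le> (1/2) * ((sqrt c * norm x)\<^sup>2 + (onorm T * (sqrt c * norm x))\<^sup>2)"
      unfolding nF by simp
    also have "\<dots> = U\<^sup>2 * (norm x)\<^sup>2" unfolding U2 using c0 by (simp add: power_mult_distrib algebra_simps)
    finally show "(norm (F x))\<^sup>2 \<le> (U * norm x)\<^sup>2" by (simp add: power_mult_distrib)
    show "0 \<le> U * norm x" using U0 by simp
  qed
  have up: "onorm F \<le> U" by (rule onorm_bound[OF U0 upper])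
  have "1 / sqrt 2 * sqrt c \<le> norm (F x1)"
  proof (rule power2_le_imp_le)
    have "(1 / sqrt 2 * sqrt c)\<^sup>2 = (1/2) * (sqrt c * norm x1)\<^sup>2" using c0 x1 by (simp add: power_mult_distrib power_divide)
    also have "\<dots> \<le> (norm (F x1))\<^sup>2" unfolding nF by simp
    finally show "(1 / sqrt 2 * sqrt c)\<^sup>2 \<le> (norm (F x1))\<^sup>2" .
  qed simp
  also have "\<dots> \<le> onorm F * norm x1" by (rule onorm[OF blF])
  finally have lo: "1 / sqrt 2 * sqrt c \<le> onorm F" using x1 by simp
  show ?thesis using lo up unfolding F_def U_def by simp
qed


lemma scaleR_scaleC_comm: "r *\<^sub>R scaleC c (x::'a::complex_vector) = scaleC c (r *\<^sub>R x)"
  by (simp add: scaleR_scaleC scaleC_scaleC mult.commute)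

lemma bc_scaleR:
  assumes "bounded_clinear f" shows "bounded_clinear (\<lambda>y. k *\<^sub>R f y)"
proof -
  obtain C where C: "\<And>x. norm (f x) \<le> norm x * C" using assms unfolding bounded_clinear_def by blast
  have "norm (k *\<^sub>R f x) \<le> norm x * (\<bar>k\<bar> * C)" for x
    using mult_left_mono[OF C[of x], of "\<bar>k\<bar>"] by (simp add: mult_ac)
  then show ?thesis using assms unfolding bounded_clinear_def clinear_def
    by (auto simp: scaleR_add_right scaleR_scaleC_comm)
qed

lemma CC_scaled:
  fixes A :: "('l::chilbert_space \<Rightarrow> 'l) set" and \<phi> :: "('l \<Rightarrow> 'l) \<Rightarrow> ('h::chilbert_space \<Rightarrow> 'h)"
  assumes cb: "CB A \<phi>"
  shows "CC A (\<lambda>a y. (1 / cbnorm A \<phi>) *\<^sub>R \<phi> a y)"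
proof -
  define c where "c = cbnorm A \<phi>"
  define k where "k = 1 / c"
  have lin: "linear_on A \<phi>" and bdd: "bdd_above (cb_values A \<phi>)" using cb unfolding CB_def by auto
  have c0: "c \<ge> 0" unfolding c_def cbnorm_def by (rule cSup_upper[OF zero_in_cb_values bdd])
  have k0: "k \<ge> 0" unfolding k_def using c0 by simp
  have linpsi: "linear_on A (\<lambda>a y. k *\<^sub>R \<phi> a y)"
    using lin unfolding linear_on_def by (auto simp: bc_scaleR scaleR_add_right scaleR_scaleC_comm)
  have vals: "v \<le> 1" if vin: "v \<in> cb_values A (\<lambda>a y. k *\<^sub>R \<phi> a y)" for v
  proof -
    obtain n M where v: "v = matnorm n (\<lambda>i j y. k *\<^sub>R \<phi> (M i j) y)"
      and MA: "\<forall>i<n. \<forall>j<n. M i j \<in> A" and M1: "matnorm n M \<le> 1"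
      using vin unfolding cb_values_def by blast
    have bcB: "\<forall>i<n. \<forall>j<n. bounded_clinear (\<phi> (M i j))" using MA lin unfolding linear_on_def by blast
    have mc: "matnorm n (\<lambda>i j. \<phi> (M i j)) \<le> c"
      unfolding c_def cbnorm_def by (rule cSup_upper[OF _ bdd]) (use MA M1 in \<open>auto simp: cb_values_def\<close>)
    show ?thesis unfolding v
    proof (rule matnorm_least)
      fix x :: "nat \<Rightarrow> 'h" assume x: "(\<Sum>j<n. (norm (x j))\<^sup>2) \<le> 1"
      define g where "g = sqrt (\<Sum>i<n. (norm (\<Sum>j<n. \<phi> (M i j) (x j)))\<^sup>2)"
      have "(\<Sum>i<n. (norm (\<Sum>j<n. k *\<^sub>R \<phi> (M i j) (x j)))\<^sup>2) = k\<^sup>2 * (\<Sum>i<n. (norm (\<Sum>j<n. \<phi> (M i j) (x j)))\<^sup>2)"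
        using k0 by (simp add: scaleR_sum_right[symmetric] power_mult_distrib sum_distrib_left)
      then have eq: "sqrt (\<Sum>i<n. (norm (\<Sum>j<n. k *\<^sub>R \<phi> (M i j) (x j)))\<^sup>2) = k * g"
        unfolding g_def using k0 by (simp add: real_sqrt_mult)
      have "g \<le> c" unfolding g_def using matnorm_upper[OF bcB x] mc by simp
      have "k * g \<le> 1"
      proof (cases "c = 0")
        case True then show ?thesis unfolding k_def by simp
      next
        case False
        then have "k * g \<le> k * c" using \<open>g \<le> c\<close> k0 by (simp add: mult_left_mono)
        also have "\<dots> = 1" unfolding k_def using False by simp
        finally show ?thesis .
      qed
      then show "sqrt (\<Sum>i<n. (norm (\<Sum>j<n. k *\<^sub>R \<phi> (M i j) (x j)))\<^sup>2) \<le> 1" using eq by simp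
    qed
  qed
  have bddpsi: "bdd_above (cb_values A (\<lambda>a y. k *\<^sub>R \<phi> a y))" using vals unfolding bdd_above_def by blast
  have "cbnorm A (\<lambda>a y. k *\<^sub>R \<phi> a y) \<le> 1"
    unfolding cbnorm_def by (rule cSup_least) (use zero_in_cb_values vals in auto)
  then show ?thesis using linpsi bddpsi unfolding CC_def CB_def k_def c_def by simp
qed


theorem lemma3p5:
  fixes A :: "('l::chilbert_space \<Rightarrow> 'l) set"
    and \<tau> :: "('l \<Rightarrow> 'l) \<Rightarrow> ('k::chilbert_space \<Rightarrow> 'k)"
    and \<phi> :: "('l \<Rightarrow> 'l) \<Rightarrow> ('h::chilbert_space \<Rightarrow> 'h)"
  assumes "unital_cstar_algebra A"
    and "universal_regular_model A TYPE('h) \<tau>"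
    and "CB A \<phi>"
  shows "(1 / sqrt 2) * sqrt (cbnorm A \<phi>) \<le> delta_reg A \<tau> \<phi> (\<lambda>a x. 0)
       \<and> delta_reg A \<tau> \<phi> (\<lambda>a x. 0)
           \<le> (sqrt (1 + (onorm (\<tau> id))\<^sup>2) / sqrt 2) * sqrt (cbnorm A \<phi>)"
proof -
  have rh: "regular_hom A \<tau>"
    and univ: "\<And>\<psi> :: ('l \<Rightarrow> 'l) \<Rightarrow> ('h \<Rightarrow> 'h). CC A \<psi> \<Longrightarrow>
        (\<exists>V :: 'h \<Rightarrow> 'k. isometry V \<and> (\<forall>a\<in>A. \<psi> a = adj V \<circ> \<tau> a \<circ> V))"
    using assms(2) unfolding universal_regular_model_def by auto
  have idA: "id \<in> A" using assms(1) unfolding unital_cstar_algebra_def by simp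
  have bcT: "bounded_clinear (\<tau> id)"
    using rh idA unfolding regular_hom_def linear_on_def by blast
  have blT: "bounded_linear (\<tau> id)" by (rule bounded_clinear_bounded_linear[OF bcT])
  have lin: "linear_on A \<phi>" and bdd: "bdd_above (cb_values A \<phi>)" using assms(3) unfolding CB_def by auto
  define c where "c = cbnorm A \<phi>"
  have c0: "c \<ge> 0" unfolding c_def cbnorm_def by (rule cSup_upper[OF zero_in_cb_values bdd])
  define G0 where "G0 = Gamma A \<tau> (\<lambda>x::'h. 0)"
  have G0z: "G0 x = 0" for x
    unfolding G0_def Gamma_def using linear_0[OF bounded_linear.linear[OF blT]] by (simp add: zero_prod_def)
  have F0: "Fset A \<tau> (\<lambda>a x::'h. 0) = {G0}"
    unfolding Fset_def Rset_def G0_def zero_map_def by simp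
  have deq: "delta_reg A \<tau> \<phi> (\<lambda>a x. 0) = max (SUP s\<in>Fset A \<tau> \<phi>. onorm s) (INF s\<in>Fset A \<tau> \<phi>. onorm s)"
    unfolding delta_reg_def op_hausdist_def F0 by (simp add: G0z)
  show ?thesis
  proof (cases "zero_map A \<phi>")
    case True
    have "Fset A \<tau> \<phi> = {G0}" unfolding Fset_def Rset_def G0_def using True by simp
    moreover have "G0 = (\<lambda>x. 0)" using G0z by auto
    ultimately have d0: "delta_reg A \<tau> \<phi> (\<lambda>a x. 0) = 0" unfolding deq by (simp add: onorm_zero)
    have vz: "v = 0" if vin: "v \<in> cb_values A \<phi>" for v
    proof -
      obtain n M where v: "v = matnorm n (\<lambda>i j. \<phi> (M i j))"
        and MA: "\<forall>i<n. \<forall>j<n. M i j \<in> A"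
        using vin unfolding cb_values_def by blast
      have bcB: "\<forall>i<n. \<forall>j<n. bounded_clinear (\<phi> (M i j))" using MA lin unfolding linear_on_def by blast
      have z: "\<phi> (M i j) = (\<lambda>x. 0)" if "i < n" "j < n" for i j
        using True MA that unfolding zero_map_def by blast
      have "matnorm n (\<lambda>i j. \<phi> (M i j)) \<le> 0"
      proof (rule matnorm_least)
        fix x :: "nat \<Rightarrow> 'h"
        have "(\<Sum>i<n. (norm (\<Sum>j<n. \<phi> (M i j) (x j)))\<^sup>2) = 0"
          by (rule sum.neutral) (simp add: z)
        then show "sqrt (\<Sum>i<n. (norm (\<Sum>j<n. \<phi> (M i j) (x j)))\<^sup>2) \<le> 0" by simp
      qed
      moreover have "sqrt (\<Sum>i<n. (norm (\<Sum>j<n. \<phi> (M i j) ((\<lambda>_. 0) j)))\<^sup>2) \<le> matnorm n (\<lambda>i j. \<phi> (M i j))"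
        by (rule matnorm_upper[OF bcB]) simp
      ultimately show ?thesis unfolding v by (smt (verit) real_sqrt_ge_zero sum_nonneg zero_le_power2)
    qed
    have "cb_values A \<phi> = {0}" using vz zero_in_cb_values by blast
    then have "c = 0" unfolding c_def cbnorm_def by simp
    then show ?thesis using d0 unfolding c_def by simp
  next
    case False
    then obtain a0 x0 where a0: "a0 \<in> A" and x0: "\<phi> a0 x0 \<noteq> 0"
      unfolding zero_map_def by (auto simp: fun_eq_iff)
    have "bounded_linear (\<phi> a0)"
      using lin a0 unfolding linear_on_def by (blast intro: bounded_clinear_bounded_linear)
    then have "x0 \<noteq> 0" using x0 linear_0[OF bounded_linear.linear] by force
    define x1 where "x1 = (1 / norm x0) *\<^sub>R x0"
    have x1: "norm x1 = 1" unfolding x1_def using \<open>x0 \<noteq> 0\<close> by simp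
    obtain V where V: "isometry V" and Veq: "\<forall>a\<in>A. (\<lambda>y. (1 / c) *\<^sub>R \<phi> a y) = adj V \<circ> \<tau> a \<circ> V"
      using univ[OF CC_scaled[OF assms(3)]] unfolding c_def by blast
    have Rdef: "Rset A \<tau> \<phi> = {(\<lambda>x. sqrt c *\<^sub>R W x) | W. isometry W \<and>
             (\<forall>a\<in>A. (\<lambda>y. (1 / c) *\<^sub>R \<phi> a y) = adj W \<circ> \<tau> a \<circ> W)}"
      unfolding Rset_def c_def using False by simp
    define L where "L = 1 / sqrt 2 * sqrt c"
    define U where "U = sqrt (1 + (onorm (\<tau> id))\<^sup>2) / sqrt 2 * sqrt c"
    have bnds: "L \<le> onorm s \<and> onorm s \<le> U" if sin: "s \<in> Fset A \<tau> \<phi>" for s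
    proof -
      obtain W where W: "isometry W" and s: "s = Gamma A \<tau> (\<lambda>x. sqrt c *\<^sub>R W x)"
        using sin unfolding Fset_def Rdef by blast
      show ?thesis unfolding s Gamma_def L_def U_def by (rule gamma_bounds[OF W bcT c0 x1])
    qed
    define s0 where "s0 = Gamma A \<tau> (\<lambda>x. sqrt c *\<^sub>R V x)"
    have s0: "s0 \<in> Fset A \<tau> \<phi>" unfolding Fset_def Rdef s0_def using V Veq by blast
    have ne: "Fset A \<tau> \<phi> \<noteq> {}" using s0 by blast
    have bA: "bdd_above (onorm ` Fset A \<tau> \<phi>)" using bnds unfolding bdd_above_def by blast
    have bB: "bdd_below (onorm ` Fset A \<tau> \<phi>)" using bnds unfolding bdd_below_def by blast
    have sup_le: "(SUP s\<in>Fset A \<tau> \<phi>. onorm s) \<le> U" by (rule cSUP_least[OF ne]) (use bnds in auto)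
    have sup_ge: "L \<le> (SUP s\<in>Fset A \<tau> \<phi>. onorm s)"
      using bnds[OF s0] cSUP_upper[OF s0 bA] by linarith
    have inf_le: "(INF s\<in>Fset A \<tau> \<phi>. onorm s) \<le> U"
      using bnds[OF s0] cINF_lower[OF bB s0] by linarith
    have "L \<le> delta_reg A \<tau> \<phi> (\<lambda>a x. 0)" unfolding deq using sup_ge by simp
    moreover have "delta_reg A \<tau> \<phi> (\<lambda>a x. 0) \<le> U" unfolding deq using sup_le inf_le by simp
    ultimately show ?thesis unfolding L_def U_def c_def by simp
  qed
qed

end
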